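(* Let $n\ge3$, $c\ge1$, $r_2\in\mathbb{C}^*$, and consider the representations $\omega'_j$ ($j=1,2,3$) of $UW_n(c)$ into $\mathrm{GL}_n(\mathbb{C})$ given, for $1\le i\le n-1$ and $1\le t\le c$, by $\omega'_j(\rho_i)=\mathrm{diag}\Big(I_{i-1},\begin{pmatrix}0&1\\1&0\end{pmatrix},I_{n-i-1}\Big)$ and $\omega'_1(\sigma_{i,t})=\mathrm{diag}\Big(I_{i-1},\begin{pmatrix}0&\frac{s_{2,t}}{r_2}\\ r_2s_{3,t}&0\end{pmatrix},I_{n-i-1}\Big)$, $\omega'_2(\sigma_{i,t})=\mathrm{diag}\Big(I_{i-1},\begin{pmatrix}0&\frac{s_{2,t}}{r_2}\\ 1&s_{4,t}\end{pmatrix},I_{n-i-1}\Big)$, $\omega'_3(\sigma_{i,t})=\mathrm{diag}\Big(I_{i-1},\begin{pmatrix}s_{1,t}&\frac{s_{2,t}}{r_2}\\ 1&0\end{pmatrix},I_{n-i-1}\Big)$, with all $s_{k,t}\in\mathbb{C}^*$. Then: (1) $\omega'_1$ is reducible if and only if $s_{2,t}=r_2$ and $s_{3,t}=\frac1{r_2}$ for all $1\le t\le c$; (2) $\omega'_2$ is reducible if and only if $\frac{s_{2,t}}{r_2}+s_{4,t}=1$ for all $1\le t\le c$; (3) $\omega'_3$ is reducible if and only if $s_{1,t}+\frac{s_{2,t}}{r_2}=1$ for all $1\le t\le c$.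
   Context: $UW_n(c)$ is the group with generators $\rho_i$ ($1\le i\le n-1$), $\sigma_{i,t}$ ($1\le i\le n-1$, $1\le t\le c$) and relations $\rho_i\rho_{i+1}\rho_i=\rho_{i+1}\rho_i\rho_{i+1}$, $\rho_i\rho_j=\rho_j\rho_i$ ($|i-j|\ge2$), $\rho_i^2=1$, $\sigma_{i,t}\sigma_{j,\ell}=\sigma_{j,\ell}\sigma_{i,t}$ ($|i-j|\ge2$), $\sigma_{i,t}\rho_j=\rho_j\sigma_{i,t}$ ($|i-j|\ge2$), $\rho_i\rho_{i+1}\sigma_{i,t}=\sigma_{i+1,t}\rho_i\rho_{i+1}$ and $\rho_i\sigma_{i+1,t}\sigma_{i,t}=\sigma_{i+1,t}\sigma_{i,t}\rho_{i+1}$ ($1\le i\le n-2$). $\mathrm{diag}$ denotes a block diagonal matrix, $I_r$ the $r\times r$ identity. Reducible means there is a nonzero proper subspace of $\mathbb{C}^n$ invariant under all image matrices. *)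

theory Defs
  imports "Jordan_Normal_Form.Matrix"
begin

text \<open>The n x n complex matrix diag(I_(i-1), [[a,b],[c,d]], I_(n-i-1)), with the paper's
  1-based index i (1 <= i <= n-1); matrix rows/columns are 0-based, so the 2x2 block
  occupies rows/columns i-1 and i.\<close>
definition blk :: "nat \<Rightarrow> nat \<Rightarrow> complex \<Rightarrow> complex \<Rightarrow> complex \<Rightarrow> complex \<Rightarrow> complex mat" where
  "blk n i a b c d = mat n n (\<lambda>(p, q).
     if p = i - 1 \<and> q = i - 1 then a
     else if p = i - 1 \<and> q = i then b
     else if p = i \<and> q = i - 1 then c
     else if p = i \<and> q = i then d
     else if p = q \<and> p \<noteq> i - 1 \<and> p \<noteq> i then 1 else 0)"

definition rho_mat :: "nat \<Rightarrow> nat \<Rightarrow> complex mat" where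
  "rho_mat n i = blk n i 0 1 1 0"

definition sigma1_mat :: "nat \<Rightarrow> complex \<Rightarrow> (nat \<Rightarrow> complex) \<Rightarrow> (nat \<Rightarrow> complex) \<Rightarrow> nat \<Rightarrow> nat \<Rightarrow> complex mat" where
  "sigma1_mat n r2 s2 s3 i t = blk n i 0 (s2 t / r2) (r2 * s3 t) 0"

definition sigma2_mat :: "nat \<Rightarrow> complex \<Rightarrow> (nat \<Rightarrow> complex) \<Rightarrow> (nat \<Rightarrow> complex) \<Rightarrow> nat \<Rightarrow> nat \<Rightarrow> complex mat" where
  "sigma2_mat n r2 s2 s4 i t = blk n i 0 (s2 t / r2) 1 (s4 t)"

definition sigma3_mat :: "nat \<Rightarrow> complex \<Rightarrow> (nat \<Rightarrow> complex) \<Rightarrow> (nat \<Rightarrow> complex) \<Rightarrow> nat \<Rightarrow> nat \<Rightarrow> complex mat" where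
  "sigma3_mat n r2 s1 s2 i t = blk n i (s1 t) (s2 t / r2) 1 0"

definition gen_images :: "nat \<Rightarrow> nat \<Rightarrow> (nat \<Rightarrow> complex mat) \<Rightarrow> (nat \<Rightarrow> nat \<Rightarrow> complex mat) \<Rightarrow> complex mat set" where
  "gen_images n c R S = R ` {1..n-1} \<union> {S i t | i t. i \<in> {1..n-1} \<and> t \<in> {1..c}}"

definition is_subspace :: "nat \<Rightarrow> complex vec set \<Rightarrow> bool" where
  "is_subspace n W \<longleftrightarrow> W \<subseteq> carrier_vec n \<and> 0\<^sub>v n \<in> W \<and>
     (\<forall>u\<in>W. \<forall>v\<in>W. u + v \<in> W) \<and> (\<forall>a::complex. \<forall>u\<in>W. a \<cdot>\<^sub>v u \<in> W)"

definition reducible :: "nat \<Rightarrow> complex mat set \<Rightarrow> bool" where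
  "reducible n Ms \<longleftrightarrow> (\<exists>W. is_subspace n W \<and> W \<noteq> {0\<^sub>v n} \<and> W \<noteq> carrier_vec n \<and>
     (\<forall>M\<in>Ms. \<forall>v\<in>W. M *\<^sub>v v \<in> W))"

end

theory Submission
  imports Defs
begin

definition sumv :: "nat \<Rightarrow> complex vec \<Rightarrow> complex" where
  "sumv n v = (\<Sum>p<n. v $ p)"

definition onesv :: "nat \<Rightarrow> complex vec" where "onesv n = vec n (\<lambda>_. 1)"

lemma onesv_simps[simp]: "dim_vec (onesv n) = n" "p < n \<Longrightarrow> onesv n $ p = 1" "onesv n \<in> carrier_vec n"
  by (auto simp: onesv_def)

lemma blk_dims[simp]: "dim_row (blk n i a b c d) = n" "dim_col (blk n i a b c d) = n"
  "blk n i a b c d \<in> carrier_mat n n"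
  by (auto simp: blk_def)

lemma blk_mult:
  assumes "p < n" "v \<in> carrier_vec n" "1 \<le> i" "i < n"
  shows "(blk n i a b c d *\<^sub>v v) $ p =
    (if p = i-1 then a * v$(i-1) + b * v$i else if p = i then c * v$(i-1) + d * v$i else v$p)"
proof -
  have "(blk n i a b c d *\<^sub>v v) $ p = (\<Sum>q<n. blk n i a b c d $$ (p,q) * v$q)"
    using assms by (simp add: scalar_prod_def row_def lessThan_atLeast0)
  also have "\<dots> = (\<Sum>q<n. (if p = i-1 then (if q = i-1 then a * v$q else 0) + (if q = i then b * v$q else 0)
      else if p = i then (if q = i-1 then c * v$q else 0) + (if q = i then d * v$q else 0)
      else (if q = p then v$q else 0)))"
    using assms by (intro sum.cong) (auto simp: blk_def)
  also have "\<dots> = (if p = i-1 then a * v$(i-1) + b * v$i else if p = i then c * v$(i-1) + d * v$i else v$p)"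
    using assms by (auto simp: sum.distrib)
  finally show ?thesis .
qed

lemma blk_mult_vec:
  assumes "v \<in> carrier_vec n" "1 \<le> i" "i < n"
  shows "blk n i a b c d *\<^sub>v v = vec n (\<lambda>p.
    (if p = i-1 then a * v$(i-1) + b * v$i else if p = i then c * v$(i-1) + d * v$i else v$p))"
proof (rule eq_vecI)
  fix p assume "p < dim_vec (vec n (\<lambda>p.
    (if p = i-1 then a * v$(i-1) + b * v$i else if p = i then c * v$(i-1) + d * v$i else v$p)))"
  then have p: "p < n" by simp
  show "(blk n i a b c d *\<^sub>v v) $ p = vec n (\<lambda>p.
    (if p = i-1 then a * v$(i-1) + b * v$i else if p = i then c * v$(i-1) + d * v$i else v$p)) $ p"
    using assms p by (subst blk_mult) auto
qed simp

lemma blk_colsum: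
  assumes "q < n" "1 \<le> i" "i < n"
  shows "(\<Sum>p<n. blk n i a b c d $$ (p,q)) =
    (if q = i-1 then a + c else if q = i then b + d else 1)"
proof -
  have "(\<Sum>p<n. blk n i a b c d $$ (p,q)) = (\<Sum>p<n. (if q = i-1 then (if p = i-1 then a else 0) + (if p = i then c else 0)
      else if q = i then (if p = i-1 then b else 0) + (if p = i then d else 0)
      else (if p = q then 1 else 0)))"
    using assms by (intro sum.cong) (auto simp: blk_def)
  also have "\<dots> = (if q = i-1 then a + c else if q = i then b + d else 1)"
    using assms by (auto simp: sum.distrib)
  finally show ?thesis .
qed

lemma colsum_pres:
  assumes M: "M \<in> carrier_mat n n" and cs: "\<And>q. q < n \<Longrightarrow> (\<Sum>p<n. M $$ (p,q)) = 1"
    and v: "v \<in> carrier_vec n"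
  shows "sumv n (M *\<^sub>v v) = sumv n v"
proof -
  have "sumv n (M *\<^sub>v v) = (\<Sum>p<n. \<Sum>q<n. M $$ (p,q) * v$q)"
    unfolding sumv_def using M v by (intro sum.cong) (auto simp: scalar_prod_def row_def lessThan_atLeast0)
  also have "\<dots> = (\<Sum>q<n. \<Sum>p<n. M $$ (p,q) * v$q)" by (rule sum.swap)
  also have "\<dots> = (\<Sum>q<n. (\<Sum>p<n. M $$ (p,q)) * v$q)" by (simp add: sum_distrib_right)
  also have "\<dots> = sumv n v" unfolding sumv_def using cs by simp
  finally show ?thesis .
qed

lemma rowsum_pres:
  assumes M: "M \<in> carrier_mat n n" and rs: "\<And>p. p < n \<Longrightarrow> (M *\<^sub>v onesv n) $ p = 1"
  shows "M *\<^sub>v (x \<cdot>\<^sub>v onesv n) = x \<cdot>\<^sub>v onesv n"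
proof -
  have "M *\<^sub>v (x \<cdot>\<^sub>v onesv n) = x \<cdot>\<^sub>v (M *\<^sub>v onesv n)"
    using M by (simp add: mult_mat_vec)
  also have "M *\<^sub>v onesv n = onesv n" using M rs by (intro eq_vecI) auto
  finally show ?thesis .
qed

lemma sub_facts:
  assumes "is_subspace n W"
  shows "\<And>u. u \<in> W \<Longrightarrow> u \<in> carrier_vec n"
    "\<And>u v. u \<in> W \<Longrightarrow> v \<in> W \<Longrightarrow> u + v \<in> W"
    "\<And>a u. u \<in> W \<Longrightarrow> a \<cdot>\<^sub>v u \<in> W"
    "\<And>u v. u \<in> W \<Longrightarrow> v \<in> W \<Longrightarrow> u - v \<in> W"
proof -
  show C: "\<And>u. u \<in> W \<Longrightarrow> u \<in> carrier_vec n" using assms by (auto simp: is_subspace_def)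
  show A: "\<And>u v. u \<in> W \<Longrightarrow> v \<in> W \<Longrightarrow> u + v \<in> W" using assms by (auto simp: is_subspace_def)
  show S: "\<And>a u. u \<in> W \<Longrightarrow> a \<cdot>\<^sub>v u \<in> W" using assms by (auto simp: is_subspace_def)
  fix u v assume u: "u \<in> W" and v: "v \<in> W"
  have "u - v = u + (-1) \<cdot>\<^sub>v v" using C[OF u] C[OF v] by (intro eq_vecI) auto
  then show "u - v \<in> W" using A[OF u S[OF v]] by simp
qed

definition dv :: "nat \<Rightarrow> nat \<Rightarrow> complex vec" where
  "dv n k = unit_vec n k - unit_vec n (k+1)"

lemma dv_carrier[simp]: "dv n k \<in> carrier_vec n" "dim_vec (dv n k) = n"
  by (auto simp: dv_def)

lemma dv_index: "p < n \<Longrightarrow> k + 1 < n \<Longrightarrow> dv n k $ p = (if p = k then 1 else if p = k+1 then -1 else 0)"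
  by (auto simp: dv_def)

lemma sumv_dv: assumes "k + 1 < n" shows "sumv n (dv n k) = 0"
proof -
  have "sumv n (dv n k) = (\<Sum>p<n. (if p = k then 1 else 0) - (if p = k+1 then 1 else 0))"
    unfolding sumv_def using assms by (intro sum.cong) (auto simp: dv_def)
  also have "\<dots> = 0" using assms by (simp add: sum_subtractf)
  finally show ?thesis .
qed

lemma rho_mult:
  assumes "v \<in> carrier_vec n" "k + 1 < n"
  shows "rho_mat n (Suc k) *\<^sub>v v = vec n (\<lambda>p. if p = k then v$(k+1) else if p = k+1 then v$k else v$p)"
proof (rule eq_vecI)
  fix p assume "p < dim_vec (vec n (\<lambda>p. if p = k then v$(k+1) else if p = k+1 then v$k else v$p))"
  then have p: "p < n" by simp
  show "(rho_mat n (Suc k) *\<^sub>v v) $ p = vec n (\<lambda>p. if p = k then v$(k+1) else if p = k+1 then v$k else v$p) $ p"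
    unfolding rho_mat_def using assms p by (subst blk_mult) auto
qed (simp add: rho_mat_def)

lemma rho_carrier[simp]: "rho_mat n i \<in> carrier_mat n n"
  by (simp add: rho_mat_def)

lemma main_dichotomy:
  assumes sub: "is_subspace n W" and nz: "W \<noteq> {0\<^sub>v n}" and np: "W \<noteq> carrier_vec n"
    and n3: "n \<ge> 3"
    and inv: "\<And>i v. i \<in> {1..n-1} \<Longrightarrow> v \<in> W \<Longrightarrow> rho_mat n i *\<^sub>v v \<in> W"
  shows "(onesv n \<in> W \<and> (\<forall>w\<in>W. \<forall>k. k + 1 < n \<longrightarrow> w$k = w$(k+1)))
       \<or> (W = {v \<in> carrier_vec n. sumv n v = 0})"
proof (cases "\<exists>w\<in>W. \<exists>k. k + 1 < n \<and> w$k \<noteq> w$(k+1)")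
  case True
  note sf = sub_facts[OF sub]
  have invS: "rho_mat n (Suc k) *\<^sub>v v \<in> W" if "k + 1 < n" "v \<in> W" for k v
    using inv[of "Suc k" v] that by auto
  from True obtain w k where w: "w \<in> W" and k: "k + 1 < n" and ne: "w$k \<noteq> w$(k+1)" by blast
  have wc: "w \<in> carrier_vec n" using sf(1)[OF w] .
  have "w - rho_mat n (Suc k) *\<^sub>v w = (w$k - w$(k+1)) \<cdot>\<^sub>v dv n k"
    using wc k by (intro eq_vecI) (auto simp: rho_mult dv_index)
  moreover have "w - rho_mat n (Suc k) *\<^sub>v w \<in> W" using sf(4)[OF w invS[OF k w]] .
  ultimately have "(w$k - w$(k+1)) \<cdot>\<^sub>v dv n k \<in> W" by simp
  from sf(3)[OF this, of "1 / (w$k - w$(k+1))"] ne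
  have dk: "dv n k \<in> W" by (simp add: smult_smult_assoc)
  have up: "dv n (k + m) \<in> W" if "k + m + 1 < n" for m
    using that
  proof (induction m)
    case 0 then show ?case using dk by simp
  next
    case (Suc m)
    then have IH: "dv n (k + m) \<in> W" by simp
    have "dv n (k + Suc m) = rho_mat n (Suc (k+m+1)) *\<^sub>v dv n (k+m) - dv n (k+m)"
      using Suc.prems by (intro eq_vecI) (auto simp: rho_mult dv_index)
    then show ?case using sf(4)[OF invS[OF _ IH] IH] Suc.prems by simp
  qed
  have down: "dv n (k - m) \<in> W" for m
  proof (induction m)
    case 0 then show ?case using dk by simp
  next
    case (Suc m)
    show ?case
    proof (cases "m < k")
      case False then show ?thesis using Suc.IH by simp
    next
      case True
      have eq: "k - m = Suc (k - Suc m)" using True by simp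
      have "dv n (k - Suc m) = rho_mat n (Suc (k - Suc m)) *\<^sub>v dv n (k-m) - dv n (k-m)"
        using True k by (intro eq_vecI) (auto simp: rho_mult dv_index)
      then show ?thesis using sf(4)[OF invS[OF _ Suc.IH] Suc.IH] True k by simp
    qed
  qed
  have alld: "dv n j \<in> W" if "j + 1 < n" for j
  proof (cases "j \<ge> k")
    case True then show ?thesis using up[of "j - k"] that by simp
  next
    case False then show ?thesis using down[of "k - j"] by simp
  qed
  have HW: "v \<in> W" if "v \<in> carrier_vec n" "sumv n v = 0" "\<forall>p. m \<le> p \<longrightarrow> p < n \<longrightarrow> v$p = 0" "m \<le> n" for m v
    using that
  proof (induction m arbitrary: v)
    case 0
    then have "v = 0\<^sub>v n" by (intro eq_vecI) auto
    then show ?case using sub by (simp add: is_subspace_def)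
  next
    case (Suc m)
    show ?case
    proof (cases "m = 0")
      case True
      have "sumv n v = v$0" unfolding sumv_def using Suc.prems True
        by (subst sum.remove[of _ 0]) (auto intro!: sum.neutral)
      then have v0: "v$0 = 0" using Suc.prems(2) by simp
      have "v = 0\<^sub>v n"
      proof (rule eq_vecI)
        fix i assume "i < dim_vec (0\<^sub>v n)"
        then have i: "i < n" by simp
        show "v $ i = 0\<^sub>v n $ i"
        proof (cases "i = 0")
          case True then show ?thesis using v0 i by simp
        next
          case False then have "v$i = 0" using Suc.prems(3) i \<open>m = 0\<close> by simp
          then show ?thesis using i by simp
        qed
      qed (use Suc.prems(1) in simp)
      then show ?thesis using sub by (simp add: is_subspace_def)
    next
      case False
      define v' where "v' = v + v$m \<cdot>\<^sub>v dv n (m - 1)"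
      have v'c: "v' \<in> carrier_vec n" using Suc.prems by (simp add: v'_def)
      have v'm: "\<forall>p. m \<le> p \<longrightarrow> p < n \<longrightarrow> v'$p = 0"
        using Suc.prems False by (auto simp: v'_def dv_index)
      have "sumv n (dv n (m-1)) = 0" using Suc.prems False by (intro sumv_dv) auto
      then have "sumv n v' = 0" using Suc.prems
        by (simp add: v'_def sumv_def sum.distrib sum_distrib_left[symmetric])
      then have "v' \<in> W" using Suc.IH[OF v'c _ v'm] Suc.prems by simp
      moreover have "v = v' - v$m \<cdot>\<^sub>v dv n (m - 1)" using Suc.prems by (intro eq_vecI) (auto simp: v'_def)
      moreover have "dv n (m-1) \<in> W" using alld[of "m-1"] Suc.prems False by simp
      ultimately show ?thesis using sf by metis
    qed
  qed
  have HW': "v \<in> W" if "v \<in> carrier_vec n" "sumv n v = 0" for v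
    using HW[of v n] that by auto
  have WH: "sumv n v = 0" if v: "v \<in> W" for v
  proof (rule ccontr)
    assume sv: "sumv n v \<noteq> 0"
    have vc: "v \<in> carrier_vec n" using sf(1)[OF v] .
    have "x \<in> W" if x: "x \<in> carrier_vec n" for x
    proof -
      define a where "a = sumv n x / sumv n v"
      have "sumv n (x - a \<cdot>\<^sub>v v) = sumv n x - a * sumv n v"
        unfolding sumv_def using x vc by (simp add: sum_subtractf sum_distrib_left)
      also have "\<dots> = 0" using sv by (simp add: a_def)
      finally have "x - a \<cdot>\<^sub>v v \<in> W" using HW' x vc by simp
      moreover have "x = (x - a \<cdot>\<^sub>v v) + a \<cdot>\<^sub>v v" using x vc by (intro eq_vecI) auto
      ultimately show ?thesis using sf(2)[OF _ sf(3)[OF v]] by metis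
    qed
    then have "W = carrier_vec n" using sf(1) by blast
    then show False using np by simp
  qed
  have "W = {v \<in> carrier_vec n. sumv n v = 0}" using WH HW' sf(1) by blast
  then show ?thesis by simp
next
  case False
  note sf = sub_facts[OF sub]
  have const: "w$p = w$0" if "w \<in> W" "p < n" for w p
    using that(2)
  proof (induction p)
    case (Suc p) then show ?case using False that(1) by force
  qed simp
  obtain w where w: "w \<in> W" "w \<noteq> 0\<^sub>v n"
    using nz sub by (auto simp: is_subspace_def)
  have wc: "w \<in> carrier_vec n" using sf(1)[OF w(1)] .
  have w0: "w$0 \<noteq> 0"
  proof
    assume "w$0 = 0"
    then have "w = 0\<^sub>v n" using const[OF w(1)] wc by (intro eq_vecI) simp_all
    then show False using w(2) by simp
  qed
  have "onesv n = (1 / w$0) \<cdot>\<^sub>v w"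
  proof (rule eq_vecI)
    fix i assume "i < dim_vec ((1 / w$0) \<cdot>\<^sub>v w)"
    then have i: "i < n" using wc by simp
    have "w$i = w$0" using const[OF w(1) i] .
    then show "onesv n $ i = ((1 / w$0) \<cdot>\<^sub>v w) $ i" using i wc w0 by simp
  qed (use wc in simp)
  then have "onesv n \<in> W" using sf(3)[OF w(1)] by simp
  then show ?thesis using False by blast
qed

lemma gen_images_cases:
  assumes SS: "\<And>i t. i \<in> {1..n-1} \<Longrightarrow> t \<in> {1..c} \<Longrightarrow> S i t = blk n i (A t) (B t) (C t) (D t)"
    and M: "M \<in> gen_images n c (rho_mat n) S"
  shows "\<exists>i\<in>{1..n-1}. M = blk n i 0 1 1 0 \<or> (\<exists>t\<in>{1..c}. M = blk n i (A t) (B t) (C t) (D t))"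
  using M SS unfolding gen_images_def rho_mat_def by blast

lemma red_rows:
  assumes n: "n \<ge> 2"
    and SS: "\<And>i t. i \<in> {1..n-1} \<Longrightarrow> t \<in> {1..c} \<Longrightarrow> S i t = blk n i (A t) (B t) (C t) (D t)"
    and cond: "\<forall>t\<in>{1..c}. A t + B t = 1 \<and> C t + D t = 1"
  shows "reducible n (gen_images n c (rho_mat n) S)"
proof -
  define W where "W = {x \<cdot>\<^sub>v onesv n | x. True}"
  have rs: "M *\<^sub>v (x \<cdot>\<^sub>v onesv n) = x \<cdot>\<^sub>v onesv n" if M: "M \<in> gen_images n c (rho_mat n) S" for M x
  proof -
    from gen_images_cases[OF SS M] obtain i a b cc d where i: "i \<in> {1..n-1}" and Mb: "M = blk n i a b cc d"
      and abcd: "a + b = 1 \<and> cc + d = 1" using cond by fastforce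
    show ?thesis unfolding Mb
    proof (rule rowsum_pres)
      fix p assume p: "p < n"
      show "(blk n i a b cc d *\<^sub>v onesv n) $ p = 1"
        using p i abcd by (subst blk_mult) auto
    qed simp
  qed
  have sub: "is_subspace n W" unfolding is_subspace_def W_def
  proof (intro conjI ballI allI)
    show "0\<^sub>v n \<in> {x \<cdot>\<^sub>v onesv n |x. True}"
      by (rule CollectI, rule exI[of _ 0]) (auto intro!: eq_vecI)
  next
    fix u v assume "u \<in> {x \<cdot>\<^sub>v onesv n |x. True}" "v \<in> {x \<cdot>\<^sub>v onesv n |x. True}"
    then obtain x y where "u = x \<cdot>\<^sub>v onesv n" "v = y \<cdot>\<^sub>v onesv n" by blast
    then have "u + v = (x + y) \<cdot>\<^sub>v onesv n" by (intro eq_vecI) (auto simp: algebra_simps)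
    then show "u + v \<in> {x \<cdot>\<^sub>v onesv n |x. True}" by blast
  next
    fix a :: complex and u assume "u \<in> {x \<cdot>\<^sub>v onesv n |x. True}"
    then obtain x where "u = x \<cdot>\<^sub>v onesv n" by blast
    then have "a \<cdot>\<^sub>v u = (a * x) \<cdot>\<^sub>v onesv n" by (intro eq_vecI) auto
    then show "a \<cdot>\<^sub>v u \<in> {x \<cdot>\<^sub>v onesv n |x. True}" by blast
  qed auto
  have nz: "W \<noteq> {0\<^sub>v n}"
  proof
    assume "W = {0\<^sub>v n}"
    then have "1 \<cdot>\<^sub>v onesv n = 0\<^sub>v n" unfolding W_def by blast
    then have "(1 \<cdot>\<^sub>v onesv n) $ 0 = 0\<^sub>v n $ 0" by simp
    then show False using n by simp
  qed
  have np: "W \<noteq> carrier_vec n"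
  proof
    assume "W = carrier_vec n"
    then have "unit_vec n 0 \<in> W" by simp
    then obtain x where "unit_vec n 0 = x \<cdot>\<^sub>v onesv n" unfolding W_def by blast
    then have "unit_vec n 0 $ 0 = (x \<cdot>\<^sub>v onesv n) $ 0" "unit_vec n 0 $ 1 = (x \<cdot>\<^sub>v onesv n) $ 1" by simp_all
    then show False using n by simp
  qed
  show ?thesis unfolding reducible_def
    using sub nz np rs by (intro exI[of _ W]) (auto simp: W_def)
qed

lemma red_cols:
  assumes n: "n \<ge> 2"
    and SS: "\<And>i t. i \<in> {1..n-1} \<Longrightarrow> t \<in> {1..c} \<Longrightarrow> S i t = blk n i (A t) (B t) (C t) (D t)"
    and cond: "\<forall>t\<in>{1..c}. A t + C t = 1 \<and> B t + D t = 1"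
  shows "reducible n (gen_images n c (rho_mat n) S)"
proof -
  define W where "W = {v \<in> carrier_vec n. sumv n v = 0}"
  have cs: "M *\<^sub>v v \<in> W" if M: "M \<in> gen_images n c (rho_mat n) S" and v: "v \<in> W" for M v
  proof -
    from gen_images_cases[OF SS M] obtain i a b cc d where i: "i \<in> {1..n-1}" and Mb: "M = blk n i a b cc d"
      and abcd: "a + cc = 1 \<and> b + d = 1" using cond by fastforce
    have "sumv n (M *\<^sub>v v) = sumv n v" unfolding Mb
    proof (rule colsum_pres)
      fix q assume q: "q < n"
      show "(\<Sum>p<n. blk n i a b cc d $$ (p, q)) = 1"
        using q i abcd by (subst blk_colsum) auto
    qed (use v in \<open>auto simp: W_def\<close>)
    moreover have "M *\<^sub>v v \<in> carrier_vec n" unfolding Mb by (rule mult_mat_vec_carrier[OF blk_dims(3)]) (use v in \<open>simp add: W_def\<close>)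
    ultimately show ?thesis using v by (auto simp: W_def)
  qed
  have sub: "is_subspace n W" unfolding is_subspace_def W_def
    by (auto simp: sumv_def sum.distrib sum_distrib_left[symmetric])
  have dW: "dv n 0 \<in> W" using n sumv_dv[of 0 n] by (auto simp: W_def)
  have nz: "W \<noteq> {0\<^sub>v n}"
  proof
    assume "W = {0\<^sub>v n}"
    then have "dv n 0 = 0\<^sub>v n" using dW by blast
    then have "dv n 0 $ 0 = 0\<^sub>v n $ 0" by simp
    then show False using n by (simp add: dv_index)
  qed
  have np: "W \<noteq> carrier_vec n"
  proof
    assume "W = carrier_vec n"
    then have "unit_vec n 0 \<in> W" by simp
    moreover have "sumv n (unit_vec n 0) = 1" unfolding sumv_def
    proof -
      have "(\<Sum>p<n. unit_vec n 0 $ p) = (\<Sum>p<n. if p = 0 then 1 else 0)"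
        using n by (intro sum.cong) auto
      then show "(\<Sum>p<n. unit_vec n 0 $ p) = 1" using n by simp
    qed
    ultimately show False by (simp add: W_def)
  qed
  show ?thesis unfolding reducible_def
    using sub nz np cs by (intro exI[of _ W]) auto
qed

lemma sumv3:
  assumes "n \<ge> 3" "\<forall>p. 3 \<le> p \<longrightarrow> p < n \<longrightarrow> x$p = 0"
  shows "sumv n x = x$0 + x$1 + x$2"
proof -
  have "{..<n} = {..<3} \<union> {3..<n}" using assms by auto
  then have "sumv n x = (\<Sum>p\<in>{..<3} \<union> {3..<n}. x$p)"
    unfolding sumv_def by simp
  also have "\<dots> = (\<Sum>p<3. x$p) + (\<Sum>p\<in>{3..<n}. x$p)"
    by (rule sum.union_disjoint) auto
  also have "(\<Sum>p\<in>{3..<n}. x$p) = 0" using assms by (intro sum.neutral) auto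
  finally show ?thesis by (simp add: numeral_3_eq_3 numeral_2_eq_2)
qed

lemma red_fwd:
  assumes n: "n \<ge> 3"
    and SS: "\<And>i t. i \<in> {1..n-1} \<Longrightarrow> t \<in> {1..c} \<Longrightarrow> S i t = blk n i (A t) (B t) (C t) (D t)"
    and red: "reducible n (gen_images n c (rho_mat n) S)"
    and t: "t \<in> {1..c}"
  shows "(A t + B t = 1 \<and> C t + D t = 1) \<or> (A t + C t = 1 \<and> B t + D t = 1)"
proof -
  from red obtain W where sub: "is_subspace n W" and nz: "W \<noteq> {0\<^sub>v n}" and np: "W \<noteq> carrier_vec n"
    and inv: "\<And>M v. M \<in> gen_images n c (rho_mat n) S \<Longrightarrow> v \<in> W \<Longrightarrow> M *\<^sub>v v \<in> W"
    unfolding reducible_def by blast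
  have invr: "rho_mat n i *\<^sub>v v \<in> W" if "i \<in> {1..n-1}" "v \<in> W" for i v
    using inv[of "rho_mat n i" v] that by (auto simp: gen_images_def)
  have one: "1 \<in> {1..n-1}" using n by auto
  have "S 1 t \<in> gen_images n c (rho_mat n) S"
    unfolding gen_images_def using one t by blast
  then have MG: "blk n 1 (A t) (B t) (C t) (D t) \<in> gen_images n c (rho_mat n) S"
    using SS[OF one t] by simp
  define M where "M = blk n 1 (A t) (B t) (C t) (D t)"
  note MW = inv[OF MG[folded M_def]]
  from main_dichotomy[OF sub nz np n invr]
  show ?thesis
  proof
    assume H: "onesv n \<in> W \<and> (\<forall>w\<in>W. \<forall>k. k + 1 < n \<longrightarrow> w$k = w$(k+1))"
    then have m: "M *\<^sub>v onesv n \<in> W" using MW by blast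
    have e0: "(M *\<^sub>v onesv n) $ 0 = A t + B t" unfolding M_def using n by (subst blk_mult) auto
    have e1: "(M *\<^sub>v onesv n) $ 1 = C t + D t" unfolding M_def using n by (subst blk_mult) auto
    have e2: "(M *\<^sub>v onesv n) $ 2 = 1" unfolding M_def using n by (subst blk_mult) auto
    have "(M *\<^sub>v onesv n) $ 0 = (M *\<^sub>v onesv n) $ 1" using H m n by force
    moreover have "(M *\<^sub>v onesv n) $ 1 = (M *\<^sub>v onesv n) $ 2" using H m n
      by (metis Suc_1 add_lessD1 eval_nat_numeral(3) less_eq_Suc_le plus_1_eq_Suc)
    ultimately show ?thesis using e0 e1 e2 by simp
  next
    assume H: "W = {v \<in> carrier_vec n. sumv n v = 0}"
    define u0 :: "complex vec" where "u0 = unit_vec n 0 - unit_vec n 2"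
    define u1 :: "complex vec" where "u1 = unit_vec n 1 - unit_vec n 2"
    have su0: "sumv n u0 = 0" using n by (subst sumv3) (auto simp: u0_def)
    have su1: "sumv n u1 = 0" using n by (subst sumv3) (auto simp: u1_def)
    have "u0 \<in> W" "u1 \<in> W" using su0 su1 H by (auto simp: u0_def u1_def)
    then have "M *\<^sub>v u0 \<in> W" "M *\<^sub>v u1 \<in> W" using MW by auto
    then have z: "sumv n (M *\<^sub>v u0) = 0" "sumv n (M *\<^sub>v u1) = 0" using H by auto
    have "sumv n (M *\<^sub>v u0) = A t + C t - 1"
      unfolding M_def using n
      by (subst sumv3) (auto simp: blk_mult_vec u0_def)
    moreover have "sumv n (M *\<^sub>v u1) = B t + D t - 1"
      unfolding M_def using n
      by (subst sumv3) (auto simp: blk_mult_vec u1_def)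
    ultimately show ?thesis using z by simp
  qed
qed

theorem proposition6p3:
  fixes n c :: nat and r2 :: complex and s1 s2 s3 s4 :: "nat \<Rightarrow> complex"
  assumes "n \<ge> 3" and "c \<ge> 1" and "r2 \<noteq> 0"
    and "\<forall>t\<in>{1..c}. s1 t \<noteq> 0 \<and> s2 t \<noteq> 0 \<and> s3 t \<noteq> 0 \<and> s4 t \<noteq> 0"
  shows "(reducible n (gen_images n c (rho_mat n) (sigma1_mat n r2 s2 s3)) \<longleftrightarrow>
            (\<forall>t\<in>{1..c}. s2 t = r2 \<and> s3 t = 1 / r2))
       \<and> (reducible n (gen_images n c (rho_mat n) (sigma2_mat n r2 s2 s4)) \<longleftrightarrow>
            (\<forall>t\<in>{1..c}. s2 t / r2 + s4 t = 1))
       \<and> (reducible n (gen_images n c (rho_mat n) (sigma3_mat n r2 s1 s2)) \<longleftrightarrow>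
            (\<forall>t\<in>{1..c}. s1 t + s2 t / r2 = 1))"
proof -
  have n2: "n \<ge> 2" using assms(1) by simp
  have S1: "\<And>i t. i \<in> {1..n-1} \<Longrightarrow> t \<in> {1..c} \<Longrightarrow> sigma1_mat n r2 s2 s3 i t =
      blk n i ((\<lambda>t. 0) t) ((\<lambda>t. s2 t / r2) t) ((\<lambda>t. r2 * s3 t) t) ((\<lambda>t. 0) t)"
    by (simp add: sigma1_mat_def)
  have S2: "\<And>i t. i \<in> {1..n-1} \<Longrightarrow> t \<in> {1..c} \<Longrightarrow> sigma2_mat n r2 s2 s4 i t =
      blk n i ((\<lambda>t. 0) t) ((\<lambda>t. s2 t / r2) t) ((\<lambda>t. 1) t) (s4 t)"
    by (simp add: sigma2_mat_def)
  have S3: "\<And>i t. i \<in> {1..n-1} \<Longrightarrow> t \<in> {1..c} \<Longrightarrow> sigma3_mat n r2 s1 s2 i t =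
      blk n i (s1 t) ((\<lambda>t. s2 t / r2) t) ((\<lambda>t. 1) t) ((\<lambda>t. 0) t)"
    by (simp add: sigma3_mat_def)
  have P1: "reducible n (gen_images n c (rho_mat n) (sigma1_mat n r2 s2 s3)) \<longleftrightarrow>
            (\<forall>t\<in>{1..c}. s2 t = r2 \<and> s3 t = 1 / r2)"
  proof
    assume R: "reducible n (gen_images n c (rho_mat n) (sigma1_mat n r2 s2 s3))"
    show "\<forall>t\<in>{1..c}. s2 t = r2 \<and> s3 t = 1 / r2"
    proof
      fix t assume t: "t \<in> {1..c}"
      from red_fwd[OF assms(1) S1 R t]
      have "s2 t / r2 = 1 \<and> r2 * s3 t = 1" by auto
      then show "s2 t = r2 \<and> s3 t = 1 / r2" using assms(3) by (auto simp: field_simps)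
    qed
  next
    assume C: "\<forall>t\<in>{1..c}. s2 t = r2 \<and> s3 t = 1 / r2"
    show "reducible n (gen_images n c (rho_mat n) (sigma1_mat n r2 s2 s3))"
      by (rule red_rows[OF n2 S1]) (use C assms(3) in auto)
  qed
  have P2: "reducible n (gen_images n c (rho_mat n) (sigma2_mat n r2 s2 s4)) \<longleftrightarrow>
            (\<forall>t\<in>{1..c}. s2 t / r2 + s4 t = 1)"
  proof
    assume R: "reducible n (gen_images n c (rho_mat n) (sigma2_mat n r2 s2 s4))"
    show "\<forall>t\<in>{1..c}. s2 t / r2 + s4 t = 1"
    proof
      fix t assume t: "t \<in> {1..c}"
      from red_fwd[OF assms(1) S2 R t] assms(4) t
      show "s2 t / r2 + s4 t = 1" by auto
    qed
  next
    assume C: "\<forall>t\<in>{1..c}. s2 t / r2 + s4 t = 1"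
    show "reducible n (gen_images n c (rho_mat n) (sigma2_mat n r2 s2 s4))"
      by (rule red_cols[OF n2 S2]) (use C in auto)
  qed
  have P3: "reducible n (gen_images n c (rho_mat n) (sigma3_mat n r2 s1 s2)) \<longleftrightarrow>
            (\<forall>t\<in>{1..c}. s1 t + s2 t / r2 = 1)"
  proof
    assume R: "reducible n (gen_images n c (rho_mat n) (sigma3_mat n r2 s1 s2))"
    show "\<forall>t\<in>{1..c}. s1 t + s2 t / r2 = 1"
    proof
      fix t assume t: "t \<in> {1..c}"
      from red_fwd[OF assms(1) S3 R t] assms(4) t
      show "s1 t + s2 t / r2 = 1" by auto
    qed
  next
    assume C: "\<forall>t\<in>{1..c}. s1 t + s2 t / r2 = 1"
    show "reducible n (gen_images n c (rho_mat n) (sigma3_mat n r2 s1 s2))"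
      by (rule red_rows[OF n2 S3]) (use C in auto)
  qed
  show ?thesis using P1 P2 P3 by blast
qed

end
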